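(* Let $N\ge1$, $\Gamma\in\{\Gamma_0(N),\Gamma_1(N)\}$, $k\in\mathbb{Z}$, $m\in\mathbb{Z}_{>0}$, and let $\varphi$ be a meromorphic Jacobi form of weight $k$ and index $m$ w.r.t. $\Gamma\ltimes\mathbb{Z}^2$ with (at most) double poles at $z=z_s=\alpha\tau+\beta$ for $s=(\alpha,\beta)\in S(\varphi)\subset\mathbb{Q}^2$. Then for all $\gamma=\begin{pmatrix}a&b\\c&d\end{pmatrix}\in\Gamma$: $E_s(\frac{a\tau+b}{c\tau+d})=(c\tau+d)^{k-2}E_{s\gamma}(\tau)$ and $D_s(\frac{a\tau+b}{c\tau+d})=(c\tau+d)^{k-1}D_{s\gamma}(\tau)$, where $s\gamma=(a\alpha+c\beta,b\alpha+d\beta)$.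
   Context: $\mathbf{e}(t)=e^{2\pi it}$. $\Gamma_0(N)$: $c\equiv0\bmod N$; $\Gamma_1(N)$: also $a\equiv d\equiv1\bmod N$. A meromorphic Jacobi form of weight $k$, index $m$ for $\Gamma\ltimes\mathbb{Z}^2$: meromorphic in $z$, weakly holomorphic in $\tau$, with $\varphi(\frac{a\tau+b}{c\tau+d},\frac z{c\tau+d})=(c\tau+d)^k\mathbf{e}(\frac{mcz^2}{c\tau+d})\varphi(\tau,z)$ for $\gamma\in\Gamma$ and $\varphi(\tau,z+\lambda\tau+\mu)=\mathbf{e}(-m(\lambda^2\tau+2\lambda z))\varphi(\tau,z)$ for $(\lambda,\mu)\in\mathbb{Z}^2$. $D_s,E_s$ are defined by $\mathbf{e}(m\alpha z_s)\varphi(\tau,z_s+\varepsilon)=\frac{E_s(\tau)}{(2\pi i\varepsilon)^2}+\frac{D_s(\tau)-2m\alpha E_s(\tau)}{2\pi i\varepsilon}+O(1)$ as $\varepsilon\to0$. *)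

theory Defs
  imports "HOL-Complex_Analysis.Complex_Analysis"
begin

definition ee :: "complex \<Rightarrow> complex" where
  "ee t = exp (2 * pi * \<i> * t)"

definition upper_half_plane :: "complex set" where
  "upper_half_plane = {\<tau>. Im \<tau> > 0}"

text \<open>Matrices (a,b,c,d) stand for [[a,b],[c,d]].\<close>
definition Gamma0 :: "int \<Rightarrow> (int \<times> int \<times> int \<times> int) set" where
  "Gamma0 N = {(a,b,c,d). a * d - b * c = 1 \<and> c mod N = 0}"

definition Gamma1 :: "int \<Rightarrow> (int \<times> int \<times> int \<times> int) set" where
  "Gamma1 N = {(a,b,c,d). a * d - b * c = 1 \<and> c mod N = 0 \<and> a mod N = 1 mod N \<and> d mod N = 1 mod N}"

definition zs :: "rat \<times> rat \<Rightarrow> complex \<Rightarrow> complex" where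
  "zs s \<tau> = of_rat (fst s) * \<tau> + of_rat (snd s)"

definition poles :: "(rat \<times> rat) set \<Rightarrow> complex \<Rightarrow> complex set" where
  "poles S \<tau> = {zs s \<tau> | s. s \<in> S}"

definition sact :: "rat \<times> rat \<Rightarrow> int \<times> int \<times> int \<times> int \<Rightarrow> rat \<times> rat" where
  "sact s g = (case g of (a,b,c,d) \<Rightarrow>
      (of_int a * fst s + of_int c * snd s, of_int b * fst s + of_int d * snd s))"

definition merom_jacobi ::
  "(int \<times> int \<times> int \<times> int) set \<Rightarrow> int \<Rightarrow> int \<Rightarrow> (rat \<times> rat) set
     \<Rightarrow> (complex \<Rightarrow> complex \<Rightarrow> complex) \<Rightarrow> bool" where
  "merom_jacobi G k m S \<phi> \<longleftrightarrow>
     (\<forall>\<tau>\<in>upper_half_plane.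
        \<phi> \<tau> meromorphic_on UNIV \<and> \<phi> \<tau> holomorphic_on (UNIV - poles S \<tau>)) \<and>
     (\<forall>z. (\<lambda>\<tau>. \<phi> \<tau> z) holomorphic_on {\<tau>\<in>upper_half_plane. z \<notin> poles S \<tau>}) \<and>
     (\<forall>\<tau>\<in>upper_half_plane. \<forall>s\<in>S.
        \<exists>B. \<forall>\<^sub>F \<epsilon> in at 0. norm (\<epsilon>\<^sup>2 * \<phi> \<tau> (zs s \<tau> + \<epsilon>)) \<le> B) \<and>
     (\<forall>(a,b,c,d)\<in>G. \<forall>\<tau>\<in>upper_half_plane. \<forall>z.
        z \<notin> poles S \<tau> \<longrightarrow> z / (of_int c * \<tau> + of_int d)
          \<notin> poles S ((of_int a * \<tau> + of_int b) / (of_int c * \<tau> + of_int d)) \<longrightarrow>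
        \<phi> ((of_int a * \<tau> + of_int b) / (of_int c * \<tau> + of_int d)) (z / (of_int c * \<tau> + of_int d))
          = (of_int c * \<tau> + of_int d) powi k
            * ee (of_int m * of_int c * z\<^sup>2 / (of_int c * \<tau> + of_int d)) * \<phi> \<tau> z) \<and>
     (\<forall>l n :: int. \<forall>\<tau>\<in>upper_half_plane. \<forall>z.
        z \<notin> poles S \<tau> \<longrightarrow> z + of_int l * \<tau> + of_int n \<notin> poles S \<tau> \<longrightarrow>
        \<phi> \<tau> (z + of_int l * \<tau> + of_int n)
          = ee (- of_int m * ((of_int l)^2 * \<tau> + 2 * of_int l * z)) * \<phi> \<tau> z)"

definition jexpansion ::
  "(complex \<Rightarrow> complex \<Rightarrow> complex) \<Rightarrow> int \<Rightarrow> rat \<times> rat \<Rightarrow> complex \<Rightarrow> complex \<Rightarrow> complex \<Rightarrow> bool" where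
  "jexpansion \<phi> m s \<tau> E D \<longleftrightarrow>
     (\<exists>B. \<forall>\<^sub>F \<epsilon> in at 0.
        norm (ee (of_int m * of_rat (fst s) * zs s \<tau>) * \<phi> \<tau> (zs s \<tau> + \<epsilon>)
              - E / (2 * pi * \<i> * \<epsilon>)\<^sup>2
              - (D - 2 * of_int m * of_rat (fst s) * E) / (2 * pi * \<i> * \<epsilon>)) \<le> B)"

definition JE :: "(complex \<Rightarrow> complex \<Rightarrow> complex) \<Rightarrow> int \<Rightarrow> rat \<times> rat \<Rightarrow> complex \<Rightarrow> complex" where
  "JE \<phi> m s \<tau> = fst (THE p. jexpansion \<phi> m s \<tau> (fst p) (snd p))"

definition JD :: "(complex \<Rightarrow> complex \<Rightarrow> complex) \<Rightarrow> int \<Rightarrow> rat \<times> rat \<Rightarrow> complex \<Rightarrow> complex" where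
  "JD \<phi> m s \<tau> = snd (THE p. jexpansion \<phi> m s \<tau> (fst p) (snd p))"

end

theory Submission
  imports Defs
begin


definition bnd :: "('a \<Rightarrow> complex) \<Rightarrow> 'a filter \<Rightarrow> bool" where
  "bnd f F \<longleftrightarrow> (\<exists>B. eventually (\<lambda>x. norm (f x) \<le> B) F)"

lemma bnd_add: "bnd f F \<Longrightarrow> bnd g F \<Longrightarrow> bnd (\<lambda>x. f x + g x) F"
  unfolding bnd_def
proof (elim exE)
  fix B1 B2 assume 1: "eventually (\<lambda>x. norm (f x) \<le> B1) F" and 2: "eventually (\<lambda>x. norm (g x) \<le> B2) F"
  have "eventually (\<lambda>x. norm (f x + g x) \<le> B1 + B2) F"
    using 1 2 by eventually_elim (meson add_mono norm_triangle_le)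
  then show "\<exists>B. eventually (\<lambda>x. norm (f x + g x) \<le> B) F" by blast
qed

lemma bnd_mult: "bnd f F \<Longrightarrow> bnd g F \<Longrightarrow> bnd (\<lambda>x. f x * g x) F"
  unfolding bnd_def
proof (elim exE)
  fix B1 B2 assume 1: "eventually (\<lambda>x. norm (f x) \<le> B1) F" and 2: "eventually (\<lambda>x. norm (g x) \<le> B2) F"
  have "eventually (\<lambda>x. norm (f x * g x) \<le> B1 * B2) F"
    using 1 2 by eventually_elim (simp add: norm_mult mult_mono order_trans[OF norm_ge_zero])
  then show "\<exists>B. eventually (\<lambda>x. norm (f x * g x) \<le> B) F" by blast
qed

lemma bnd_const: "bnd (\<lambda>_. c) F"
  unfolding bnd_def by (intro exI[of _ "norm c"]) simp

lemma bnd_cong: assumes "eventually (\<lambda>x. f x = g x) F" "bnd f F" shows "bnd g F"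
proof -
  obtain B where "eventually (\<lambda>x. norm (f x) \<le> B) F" using assms(2) bnd_def by blast
  with assms(1) have "eventually (\<lambda>x. norm (g x) \<le> B) F" by eventually_elim simp
  then show ?thesis unfolding bnd_def by blast
qed

lemma bnd_compose: "bnd f G \<Longrightarrow> filterlim h G F \<Longrightarrow> bnd (\<lambda>x. f (h x)) F"
  unfolding bnd_def filterlim_iff by blast

lemma bnd_tendsto: "(f \<longlongrightarrow> l) F \<Longrightarrow> bnd f F"
proof -
  assume "(f \<longlongrightarrow> l) F"
  then have "((\<lambda>x. norm (f x)) \<longlongrightarrow> norm l) F" by (rule tendsto_norm)
  then have "eventually (\<lambda>x. norm (f x) < norm l + 1) F" by (rule order_tendstoD) simp
  then show ?thesis unfolding bnd_def by (auto elim: eventually_mono intro!: exI[of _ "norm l + 1"])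
qed

lemma taylor1:
  assumes "g holomorphic_on S" "open S" "0 \<in> S"
  shows "bnd (\<lambda>e. (g e - g 0) / e) (at 0)"
proof -
  define h where "h = (\<lambda>z. if z = 0 then deriv g 0 else (g z - g 0) / (z - 0))"
  have "h holomorphic_on S" unfolding h_def using pole_lemma_open[OF assms(1,2)] by blast
  then have "isCont h 0" using assms(2,3)
    by (meson continuous_on_eq_continuous_at holomorphic_on_imp_continuous_on)
  then have "(h \<longlongrightarrow> h 0) (at 0)" by (simp add: isCont_def)
  then have B: "bnd h (at 0)" by (rule bnd_tendsto)
  have E: "eventually (\<lambda>e. h e = (g e - g 0) / e) (at 0)"
    by (simp add: h_def eventually_at_filter)
  show ?thesis by (rule bnd_cong[OF E B])
qed

lemma taylor2:
  assumes "g holomorphic_on S" "open S" "0 \<in> S"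
  shows "bnd (\<lambda>e. (g e - g 0 - deriv g 0 * e) / e\<^sup>2) (at 0)"
proof -
  define h where "h = (\<lambda>z. if z = 0 then deriv g 0 else (g z - g 0) / (z - 0))"
  have "h holomorphic_on S" unfolding h_def using pole_lemma_open[OF assms(1,2)] by blast
  from taylor1[OF this assms(2,3)] have B: "bnd (\<lambda>e. (h e - h 0) / e) (at 0)" .
  have E: "eventually (\<lambda>e. (h e - h 0) / e = (g e - g 0 - deriv g 0 * e) / e\<^sup>2) (at 0)"
    by (simp add: h_def eventually_at_filter field_simps power2_eq_square)
  show ?thesis by (rule bnd_cong[OF E B])
qed

lemma bnd_zero_coeffs:
  fixes u v :: complex
  assumes "bnd (\<lambda>e. u / e\<^sup>2 + v / e) (at 0)"
  shows "u = 0 \<and> v = 0"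
proof -
  obtain B where B: "eventually (\<lambda>e. norm (u / e\<^sup>2 + v / e) \<le> B) (at (0::complex))"
    using assms unfolding bnd_def by blast
  have *: "norm (u + v * e) \<le> B * norm e ^ 2" if h: "e \<noteq> 0" "norm (u / e\<^sup>2 + v / e) \<le> B" for e :: complex
  proof -
    have "u + v * e = e\<^sup>2 * (u / e\<^sup>2 + v / e)" using h(1) by (simp add: field_simps power2_eq_square)
    then have "norm (u + v * e) = norm e ^ 2 * norm (u / e\<^sup>2 + v / e)" by (simp add: norm_mult norm_power)
    also have "\<dots> \<le> norm e ^ 2 * B" using h by (intro mult_left_mono) auto
    finally show "norm (u + v * e) \<le> B * norm e ^ 2" by (simp add: mult.commute)
  qed
  have "eventually (\<lambda>e. norm (u + v * e) \<le> B * norm e ^ 2) (at (0::complex))"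
    using B unfolding eventually_at_filter by (rule eventually_mono) (use * in blast)
  moreover have "((\<lambda>e::complex. B * norm e ^ 2) \<longlongrightarrow> 0) (at 0)"
    by (auto intro!: tendsto_eq_intros)
  ultimately have "((\<lambda>e. u + v * e) \<longlongrightarrow> 0) (at (0::complex))"
    by (rule Lim_null_comparison)
  moreover have "((\<lambda>e. u + v * e) \<longlongrightarrow> u) (at (0::complex))"
    by (auto intro!: tendsto_eq_intros)
  ultimately have u: "u = 0" using tendsto_unique by (metis at_neq_bot)
  have **: "norm v \<le> B * norm e" if h: "e \<noteq> 0" "norm (u / e\<^sup>2 + v / e) \<le> B" for e :: complex
  proof -
    have "v = e * (u / e\<^sup>2 + v / e)" using h(1) u by (simp add: field_simps power2_eq_square)
    then have "norm v = norm e * norm (u / e\<^sup>2 + v / e)" by (metis norm_mult)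
    also have "\<dots> \<le> norm e * B" using h by (intro mult_left_mono) auto
    finally show "norm v \<le> B * norm e" by (simp add: mult.commute)
  qed
  have "eventually (\<lambda>e. norm v \<le> B * norm e) (at (0::complex))"
    using B unfolding eventually_at_filter by (rule eventually_mono) (use ** in blast)
  moreover have "((\<lambda>e::complex. B * norm e) \<longlongrightarrow> 0) (at 0)"
    by (auto intro!: tendsto_eq_intros)
  ultimately have "((\<lambda>e::complex. v) \<longlongrightarrow> 0) (at 0)"
    by (rule Lim_null_comparison)
  then have "v = 0" using tendsto_unique tendsto_const by (metis at_neq_bot)
  with u show ?thesis by simp
qed

lemma jexpansion_bnd:
  "jexpansion \<phi> m s \<tau> E D \<longleftrightarrow> bnd (\<lambda>\<epsilon>. ee (of_int m * of_rat (fst s) * zs s \<tau>) * \<phi> \<tau> (zs s \<tau> + \<epsilon>)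
              - E / (2 * pi * \<i> * \<epsilon>)\<^sup>2
              - (D - 2 * of_int m * of_rat (fst s) * E) / (2 * pi * \<i> * \<epsilon>)) (at 0)"
  unfolding jexpansion_def bnd_def by simp

lemma alg1: fixes x E1 E2 F1 F2 c e :: complex shows "(x - E1/(c*e)^2 - F1/(c*e)) + - (x - E2/(c*e)^2 - F2/(c*e)) = ((E2-E1)/c^2)/e^2 + ((F2-F1)/c)/e"
proof -
  have 1: "E2/(c*e)^2 - E1/(c*e)^2 = ((E2-E1)/c^2)/e^2" by (simp add: diff_divide_distrib power_mult_distrib divide_divide_eq_left)
  have 2: "F2/(c*e) - F1/(c*e) = ((F2-F1)/c)/e" by (simp add: diff_divide_distrib divide_divide_eq_left)
  show ?thesis using 1 2 by (simp add: algebra_simps)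
qed

lemma jexpansion_unique:
  assumes "jexpansion \<phi> m s \<tau> E1 D1" "jexpansion \<phi> m s \<tau> E2 D2"
  shows "E1 = E2 \<and> D1 = D2"
proof -
  define A where "A = (\<lambda>\<epsilon>. ee (of_int m * of_rat (fst s) * zs s \<tau>) * \<phi> \<tau> (zs s \<tau> + \<epsilon>))"
  define M where "M = 2 * of_int m * (of_rat (fst s) :: complex)"
  define c where "c = 2 * pi * \<i>"
  have c0: "c \<noteq> 0" by (simp add: c_def)
  have 1: "bnd (\<lambda>\<epsilon>. A \<epsilon> - E1 / (c * \<epsilon>)\<^sup>2 - (D1 - M * E1) / (c * \<epsilon>)) (at 0)"
    using assms(1) unfolding jexpansion_bnd A_def M_def c_def .
  have 2: "bnd (\<lambda>\<epsilon>. A \<epsilon> - E2 / (c * \<epsilon>)\<^sup>2 - (D2 - M * E2) / (c * \<epsilon>)) (at 0)"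
    using assms(2) unfolding jexpansion_bnd A_def M_def c_def .
  have 2: "bnd (\<lambda>\<epsilon>. - (A \<epsilon> - E2 / (c * \<epsilon>)\<^sup>2 - (D2 - M * E2) / (c * \<epsilon>))) (at 0)"
    by (rule bnd_cong[OF _ bnd_mult[OF bnd_const[of "-1"] 2]]) (intro always_eventually allI, simp)
  have "bnd (\<lambda>e. ((E2 - E1) / c\<^sup>2) / e\<^sup>2 + (((D2 - M * E2) - (D1 - M * E1)) / c) / e) (at 0)"
    apply (rule bnd_cong[OF _ bnd_add[OF 1 2]])
    by (intro always_eventually allI) (rule alg1)
  from bnd_zero_coeffs[OF this] have z: "(E2 - E1) / c\<^sup>2 = 0" "((D2 - M * E2) - (D1 - M * E1)) / c = 0" by blast+
  from z(1) c0 have e: "E1 = E2" by simp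
  from z(2) c0 e have "D1 = D2" by simp
  with e show ?thesis by blast
qed

lemma JE_JD_eq:
  assumes "jexpansion \<phi> m s \<tau> E D"
  shows "JE \<phi> m s \<tau> = E \<and> JD \<phi> m s \<tau> = D"
proof -
  have "(THE p. jexpansion \<phi> m s \<tau> (fst p) (snd p)) = (E, D)"
  proof (rule the_equality)
    show "jexpansion \<phi> m s \<tau> (fst (E, D)) (snd (E, D))" using assms by simp
    fix p assume "jexpansion \<phi> m s \<tau> (fst p) (snd p)"
    from jexpansion_unique[OF this assms] show "p = (E, D)" by (simp add: prod_eq_iff)
  qed
  then show ?thesis unfolding JE_def JD_def by simp
qed



lemma alg2:
  fixes C P g0 g1 c e K :: complex
  assumes "e \<noteq> 0" "c \<noteq> 0"
  shows "C * ((e\<^sup>2 * P - g0 - g1 * e) / e\<^sup>2) = C * P - (C * g0 * c\<^sup>2) / (c * e)\<^sup>2 - ((C * g1 * c + K) - K) / (c * e)"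
  using assms by (simp add: field_simps power2_eq_square)

lemma eventually_at0_ball: "r > 0 \<Longrightarrow> eventually (\<lambda>e. e \<in> ball (0::complex) r - {0}) (at 0)"
  unfolding eventually_at by (intro exI[of _ r]) (auto simp: dist_commute)

lemma exist_expansion:
  assumes iso: "isolated_singularity_at (\<phi> \<tau>) (zs s \<tau>)"
    and bd: "\<exists>B. eventually (\<lambda>\<epsilon>. norm (\<epsilon>\<^sup>2 * \<phi> \<tau> (zs s \<tau> + \<epsilon>)) \<le> B) (at 0)"
  shows "\<exists>E D. jexpansion \<phi> m s \<tau> E D"
proof -
  define z0 where "z0 = zs s \<tau>"
  obtain r where r: "r > 0" "\<phi> \<tau> analytic_on ball z0 r - {z0}"
    using iso unfolding isolated_singularity_at_def z0_def by blast
  have h1: "\<phi> \<tau> holomorphic_on ball z0 r - {z0}" using r(2) by (rule analytic_imp_holomorphic)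
  have "(\<phi> \<tau> \<circ> (\<lambda>\<epsilon>. z0 + \<epsilon>)) holomorphic_on ball 0 r - {0}"
    by (rule holomorphic_on_compose_gen[OF _ h1]) (auto intro!: holomorphic_intros simp: dist_norm)
  then have hol: "(\<lambda>\<epsilon>. \<epsilon>\<^sup>2 * \<phi> \<tau> (z0 + \<epsilon>)) holomorphic_on ball 0 r - {0}"
    by (auto intro!: holomorphic_intros simp: o_def)
  have int: "0 \<in> interior (ball (0::complex) r)" using r(1) by simp
  have "\<exists>g. g holomorphic_on ball 0 r \<and> (\<forall>z\<in>ball 0 r - {0}. g z = z\<^sup>2 * \<phi> \<tau> (z0 + z))"
    apply (subst holomorphic_on_extend_bounded[OF hol int]) using bd unfolding z0_def .
  then obtain g where g: "g holomorphic_on ball 0 r" "\<forall>z\<in>ball 0 r - {0}. g z = z\<^sup>2 * \<phi> \<tau> (z0 + z)"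
    by blast
  define C where "C = ee (of_int m * of_rat (fst s) * z0)"
  define c where "c = 2 * pi * \<i>"
  define K where "K = 2 * of_int m * of_rat (fst s) * (C * g 0 * c\<^sup>2)"
  have c0: "c \<noteq> 0" by (simp add: c_def)
  have "bnd (\<lambda>e. (g e - g 0 - deriv g 0 * e) / e\<^sup>2) (at 0)"
    by (rule taylor2[OF g(1)]) (use r in auto)
  then have B: "bnd (\<lambda>e. C * ((g e - g 0 - deriv g 0 * e) / e\<^sup>2)) (at 0)"
    by (rule bnd_mult[OF bnd_const])
  have E: "eventually (\<lambda>e. C * ((g e - g 0 - deriv g 0 * e) / e\<^sup>2) =
       C * \<phi> \<tau> (z0 + e) - (C * g 0 * c\<^sup>2) / (c * e)\<^sup>2 - ((C * deriv g 0 * c + K) - K) / (c * e)) (at 0)"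
    using eventually_at0_ball[OF r(1)]
  proof (rule eventually_mono)
    fix e :: complex assume e: "e \<in> ball 0 r - {0}"
    then have "g e = e\<^sup>2 * \<phi> \<tau> (z0 + e)" using g(2) by blast
    with alg2[of e c C "\<phi> \<tau> (z0 + e)"] e c0 show "C * ((g e - g 0 - deriv g 0 * e) / e\<^sup>2) =
       C * \<phi> \<tau> (z0 + e) - (C * g 0 * c\<^sup>2) / (c * e)\<^sup>2 - ((C * deriv g 0 * c + K) - K) / (c * e)" by simp
  qed
  have "jexpansion \<phi> m s \<tau> (C * g 0 * c\<^sup>2) (C * deriv g 0 * c + K)"
    unfolding jexpansion_bnd using bnd_cong[OF E B] unfolding C_def c_def K_def z0_def .
  then show ?thesis by blast
qed

lemma bnd_extend:
  fixes T :: "complex \<Rightarrow> complex"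
  assumes "countable C" "eventually (\<lambda>e. e \<notin> C \<longrightarrow> norm (T e) \<le> B) (at 0)"
    "eventually (\<lambda>e. isCont T e) (at 0)"
  shows "eventually (\<lambda>e. norm (T e) \<le> B) (at 0)"
proof -
  from assms(2,3) have "eventually (\<lambda>e. (e \<notin> C \<longrightarrow> norm (T e) \<le> B) \<and> isCont T e) (at 0)"
    by (rule eventually_conj)
  then obtain d where d: "d > 0" "\<And>x. x \<noteq> 0 \<Longrightarrow> dist x 0 < d \<Longrightarrow> (x \<notin> C \<longrightarrow> norm (T x) \<le> B) \<and> isCont T x"
    unfolding eventually_at by auto
  have "norm (T x) \<le> B" if x: "x \<noteq> 0" "dist x 0 < d" for x
  proof (rule ccontr)
    assume "\<not> norm (T x) \<le> B"
    then have lt: "B < norm (T x)" by simp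
    have "isCont (\<lambda>y. norm (T y)) x" using d(2)[OF x] by (auto intro: continuous_intros)
    then have "((\<lambda>y. norm (T y)) \<longlongrightarrow> norm (T x)) (at x)" by (simp add: isCont_def)
    from order_tendstoD(1)[OF this lt] obtain e where e: "e > 0" "\<And>y. y \<noteq> x \<Longrightarrow> dist y x < e \<Longrightarrow> B < norm (T y)"
      unfolding eventually_at by auto
    define e' where "e' = min e (min (d - norm x) (norm x))"
    have nx: "norm x < d" "norm x > 0" using x by auto
    have e'0: "e' > 0" using e(1) nx by (simp add: e'_def)
    have "\<not> ball x e' \<subseteq> insert x C"
    proof
      assume "ball x e' \<subseteq> insert x C"
      then have "countable (ball x e')" by (rule countable_subset[OF _ countable_insert[OF assms(1)]])
      with uncountable_ball[OF e'0] show False by blast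
    qed
    then obtain y where y: "y \<in> ball x e'" "y \<noteq> x" "y \<notin> C" by blast
    have dy: "dist y x < e'" using y(1) by (simp add: dist_commute)
    have "y \<noteq> 0"
    proof
      assume "y = 0" then have "dist y x = norm x" by simp
      with dy show False by (simp add: e'_def)
    qed
    moreover have "dist y 0 < d"
    proof -
      have "norm y \<le> norm x + dist y x" by (metis dist_norm norm_triangle_sub add.commute)
      moreover have "dist y x < d - norm x" using dy by (simp add: e'_def)
      ultimately show ?thesis by simp
    qed
    ultimately have "norm (T y) \<le> B" using d(2) y(3) by blast
    moreover have "dist y x < e" using dy by (simp add: e'_def)
    then have "B < norm (T y)" using e(2)[OF y(2)] by blast
    ultimately show False by simp
  qed
  then show ?thesis unfolding eventually_at using d(1) by blast
qed

lemma exp_taylor: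
  fixes k1 k2 :: complex
  defines "L \<equiv> (\<lambda>e. ee (k1 * e + k2 * e\<^sup>2))"
  shows "bnd L (at 0)" "bnd (\<lambda>e. (L e - 1) / e) (at 0)"
    "bnd (\<lambda>e. (L e - 1 - 2 * pi * \<i> * k1 * e) / e\<^sup>2) (at 0)"
proof -
  have hol: "L holomorphic_on UNIV" unfolding L_def ee_def by (auto intro!: holomorphic_intros)
  have L0: "L 0 = 1" by (simp add: L_def ee_def)
  have "(L has_field_derivative 2 * pi * \<i> * k1) (at 0)"
    unfolding L_def ee_def by (auto intro!: derivative_eq_intros)
  then have dL: "deriv L 0 = 2 * pi * \<i> * k1" by (rule DERIV_imp_deriv)
  have "isCont L 0" using hol
    by (meson UNIV_I continuous_on_eq_continuous_at holomorphic_on_imp_continuous_on open_UNIV)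
  then show "bnd L (at 0)" by (intro bnd_tendsto) (simp add: isCont_def)
  show "bnd (\<lambda>e. (L e - 1) / e) (at 0)" using taylor1[OF hol] L0 by simp
  show "bnd (\<lambda>e. (L e - 1 - 2 * pi * \<i> * k1 * e) / e\<^sup>2) (at 0)" using taylor2[OF hol] L0 dL by simp
qed



lemma alg3:
  fixes p Lv Rv E D j c e k1 M al al' :: complex
  assumes e0: "e \<noteq> 0" and j0: "j \<noteq> 0" and c0: "c \<noteq> 0" and key: "j * k1 = 2*M*al - 2*M*al'*j"
  shows "p * Lv * (Rv + E / (c * (e/j))\<^sup>2 + (D - 2*M*al*E) / (c * (e/j)))
           - (p*j\<^sup>2*E) / (c*e)\<^sup>2 - (p*j*D - 2*M*al'*(p*j\<^sup>2*E)) / (c*e)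
         = p * Lv * Rv + (p*E*j\<^sup>2/c\<^sup>2) * ((Lv - 1 - c*k1*e) / e\<^sup>2) + (p*(D - 2*M*al*E)*j/c) * ((Lv - 1) / e)"
proof -
  have k: "2*M*al'*(p*j\<^sup>2*E) = p*j*E*(2*M*al - j*k1)"
  proof -
    have "2*M*al - j*k1 = 2*M*al'*j" using key by (simp add: algebra_simps)
    then show ?thesis by (simp add: power2_eq_square algebra_simps)
  qed
  show ?thesis unfolding k using e0 j0 c0
    by (simp add: field_simps power2_eq_square)
qed

lemma transfer_abstract:
  fixes f1 f2 :: "complex \<Rightarrow> complex" and E D p j k1 k2 M al al' :: complex and C :: "complex set"
  assumes j0: "j \<noteq> 0"
    and b1: "bnd (\<lambda>\<delta>. f1 \<delta> - E / (2*pi*\<i>*\<delta>)\<^sup>2 - (D - 2*M*al*E) / (2*pi*\<i>*\<delta>)) (at 0)"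
    and eq: "\<And>e. e \<notin> C \<Longrightarrow> e \<noteq> 0 \<Longrightarrow> f2 e = p * ee (k1*e + k2*e\<^sup>2) * f1 (e/j)"
    and key: "j * k1 = 2*M*al - 2*M*al'*j"
    and cont: "eventually (\<lambda>e. isCont f2 e) (at 0)"
    and cC: "countable C"
  shows "bnd (\<lambda>e. f2 e - (p*j\<^sup>2*E) / (2*pi*\<i>*e)\<^sup>2 - (p*j*D - 2*M*al'*(p*j\<^sup>2*E)) / (2*pi*\<i>*e)) (at 0)"
proof -
  define c :: complex where "c = 2*pi*\<i>"
  have c0: "c \<noteq> 0" by (simp add: c_def)
  define L where "L = (\<lambda>e. ee (k1 * e + k2 * e\<^sup>2))"
  define R where "R = (\<lambda>\<delta>. f1 \<delta> - E / (c*\<delta>)\<^sup>2 - (D - 2*M*al*E) / (c*\<delta>))"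
  define T where "T = (\<lambda>e. f2 e - (p*j\<^sup>2*E) / (c*e)\<^sup>2 - (p*j*D - 2*M*al'*(p*j\<^sup>2*E)) / (c*e))"
  define W where "W = (\<lambda>e. p * L e * R (e/j) + (p*E*j\<^sup>2/c\<^sup>2) * ((L e - 1 - c*k1*e) / e\<^sup>2)
      + (p*(D - 2*M*al*E)*j/c) * ((L e - 1) / e))"
  have L: "bnd L (at 0)" "bnd (\<lambda>e. (L e - 1) / e) (at 0)" "bnd (\<lambda>e. (L e - 1 - c*k1*e) / e\<^sup>2) (at 0)"
    using exp_taylor[of k1 k2] unfolding L_def c_def by auto
  have R: "bnd R (at 0)" using b1 unfolding R_def c_def .
  have "filterlim (\<lambda>e. e / j) (at 0) (at 0)"
  proof (rule filterlim_atI)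
    show "((\<lambda>e. e / j) \<longlongrightarrow> 0) (at 0)" using j0 by (auto intro!: tendsto_eq_intros)
    show "eventually (\<lambda>e. e / j \<noteq> 0) (at 0)"
      unfolding eventually_at by (rule exI[of _ 1]) (simp add: j0)
  qed
  then have Rj: "bnd (\<lambda>e. R (e / j)) (at 0)" by (rule bnd_compose[OF R])
  have "bnd W (at 0)" unfolding W_def
    by (intro bnd_add bnd_mult bnd_const L Rj)
  then obtain B where B: "eventually (\<lambda>e. norm (W e) \<le> B) (at 0)" unfolding bnd_def by blast
  have "eventually (\<lambda>e. e \<notin> C \<longrightarrow> norm (T e) \<le> B) (at 0)"
    using B unfolding eventually_at_filter
  proof (rule eventually_mono, intro impI)
    fix e assume h: "e \<noteq> 0 \<longrightarrow> e \<in> UNIV \<longrightarrow> norm (W e) \<le> B" "e \<noteq> 0" "e \<in> UNIV" "e \<notin> C"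
    have "T e = p * L e * (R (e/j) + E / (c * (e/j))\<^sup>2 + (D - 2*M*al*E) / (c * (e/j)))
           - (p*j\<^sup>2*E) / (c*e)\<^sup>2 - (p*j*D - 2*M*al'*(p*j\<^sup>2*E)) / (c*e)"
      unfolding T_def R_def L_def using eq[OF h(4,2)] by simp
    also have "\<dots> = W e" unfolding W_def by (rule alg3[OF h(2) j0 c0 key])
    finally show "norm (T e) \<le> B" using h by simp
  qed
  moreover have "eventually (\<lambda>e. isCont T e) (at 0)"
    using cont unfolding eventually_at_filter
  proof (rule eventually_mono, intro impI)
    fix e assume h: "e \<noteq> 0 \<longrightarrow> e \<in> UNIV \<longrightarrow> isCont f2 e" "e \<noteq> 0" "e \<in> UNIV"
    then show "isCont T e" unfolding T_def using c0 by (auto intro!: continuous_intros)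
  qed
  ultimately have "eventually (\<lambda>e. norm (T e) \<le> B) (at 0)" by (rule bnd_extend[OF cC])
  then show ?thesis unfolding bnd_def T_def c_def by blast
qed



lemma powi_fact1:
  fixes j :: complex assumes "j \<noteq> 0"
  shows "E = j powi (k - 2) * (inverse (j powi k) * j\<^sup>2 * E)"
    "D = j powi (k - 1) * (inverse (j powi k) * j * D)"
proof -
  have "j powi (k - 2) = j powi k / j\<^sup>2" using assms by (simp add: power_int_diff)
  then show "E = j powi (k - 2) * (inverse (j powi k) * j\<^sup>2 * E)" using assms by (simp add: field_simps)
  have "j powi (k - 1) = j powi k / j" using assms by (simp add: power_int_diff)
  then show "D = j powi (k - 1) * (inverse (j powi k) * j * D)" using assms by (simp add: field_simps)
qed

lemma countable_poles: "countable (poles S \<tau>)"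
proof -
  have "poles S \<tau> = (\<lambda>s. zs s \<tau>) ` S" unfolding poles_def by auto
  moreover have "countable S" by (rule countable_subset[OF subset_UNIV]) simp
  ultimately show ?thesis by simp
qed

theorem proposition3p5:
  fixes N k m :: int and G :: "(int \<times> int \<times> int \<times> int) set"
    and S :: "(rat \<times> rat) set" and \<phi> :: "complex \<Rightarrow> complex \<Rightarrow> complex"
  assumes "N \<ge> 1"
    and "G = Gamma0 N \<or> G = Gamma1 N"
    and "m > 0"
    and "merom_jacobi G k m S \<phi>"
    and "(a, b, c, d) \<in> G"
    and "s \<in> S"
    and "\<tau> \<in> upper_half_plane"
  shows "JE \<phi> m s ((of_int a * \<tau> + of_int b) / (of_int c * \<tau> + of_int d))
           = (of_int c * \<tau> + of_int d) powi (k - 2) * JE \<phi> m (sact s (a, b, c, d)) \<tau>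
       \<and> JD \<phi> m s ((of_int a * \<tau> + of_int b) / (of_int c * \<tau> + of_int d))
           = (of_int c * \<tau> + of_int d) powi (k - 1) * JD \<phi> m (sact s (a, b, c, d)) \<tau>"
proof -
  have det: "a * d - b * c = 1" using assms(2,5) by (auto simp: Gamma0_def Gamma1_def)
  have detc: "of_int a * of_int d - of_int b * of_int c = (1::complex)"
    using arg_cong[OF det, of "of_int :: int \<Rightarrow> complex"] by simp
  have Imt: "Im \<tau> > 0" using assms(7) by (simp add: upper_half_plane_def)
  define j where "j = of_int c * \<tau> + of_int d"
  define \<tau>' where "\<tau>' = (of_int a * \<tau> + of_int b) / j"
  have j0: "j \<noteq> 0"
  proof
    assume "j = 0"
    then have "Im j = 0" "Re j = 0" by simp_all
    then have "of_int c * Im \<tau> = 0" "of_int c * Re \<tau> + of_int d = 0" by (simp_all add: j_def)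
    then have "c = 0" "d = 0" using Imt by auto
    with det show False by simp
  qed
  have Imt': "Im \<tau>' > 0"
  proof -
    have "Im \<tau>' = (Im (of_int a * \<tau> + of_int b) * Re j - Re (of_int a * \<tau> + of_int b) * Im j) / (norm j)\<^sup>2"
      unfolding \<tau>'_def by (rule Im_divide')
    also have "Im (of_int a * \<tau> + of_int b) * Re j - Re (of_int a * \<tau> + of_int b) * Im j
        = (of_int a * of_int d - of_int b * of_int c) * Im \<tau>"
      by (simp add: j_def algebra_simps)
    also have "(of_int a * of_int d - of_int b * of_int c :: real) = 1"
      using arg_cong[OF det, of "of_int :: int \<Rightarrow> real"] by simp
    finally show ?thesis using Imt j0 by simp
  qed
  then have t'H: "\<tau>' \<in> upper_half_plane" by (simp add: upper_half_plane_def)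
  from assms(4) have mero: "\<And>t. t \<in> upper_half_plane \<Longrightarrow> \<phi> t meromorphic_on UNIV"
    and bd: "\<And>t s. t \<in> upper_half_plane \<Longrightarrow> s \<in> S \<Longrightarrow>
        \<exists>B. \<forall>\<^sub>F \<epsilon> in at 0. norm (\<epsilon>\<^sup>2 * \<phi> t (zs s t + \<epsilon>)) \<le> B"
    and law0: "\<forall>(a,b,c,d)\<in>G. \<forall>\<tau>\<in>upper_half_plane. \<forall>z.
        z \<notin> poles S \<tau> \<longrightarrow> z / (of_int c * \<tau> + of_int d)
          \<notin> poles S ((of_int a * \<tau> + of_int b) / (of_int c * \<tau> + of_int d)) \<longrightarrow>
        \<phi> ((of_int a * \<tau> + of_int b) / (of_int c * \<tau> + of_int d)) (z / (of_int c * \<tau> + of_int d))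
          = (of_int c * \<tau> + of_int d) powi k
            * ee (of_int m * of_int c * z\<^sup>2 / (of_int c * \<tau> + of_int d)) * \<phi> \<tau> z"
    unfolding merom_jacobi_def by blast+
  have law: "\<And>z. z \<notin> poles S \<tau> \<Longrightarrow> z / j \<notin> poles S \<tau>' \<Longrightarrow>
      \<phi> \<tau>' (z / j) = j powi k * ee (of_int m * of_int c * z\<^sup>2 / j) * \<phi> \<tau> z"
    using law0 assms(5,7) unfolding j_def \<tau>'_def by fastforce
  have iso: "\<And>t z. t \<in> upper_half_plane \<Longrightarrow> isolated_singularity_at (\<phi> t) z"
    using mero by (simp add: meromorphic_on_altdef)
  obtain E D where ED: "jexpansion \<phi> (m) s \<tau>' E D"
    using exist_expansion[of \<phi> \<tau>' s m, OF iso[OF t'H] bd[OF t'H assms(6)]] by blast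
  define s' where "s' = sact s (a, b, c, d)"
  define M :: complex where "M = of_int m"
  define al :: complex where "al = of_rat (fst s)"
  define be :: complex where "be = of_rat (snd s)"
  define al' :: complex where "al' = of_rat (fst s')"
  define be' :: complex where "be' = of_rat (snd s')"
  define z' where "z' = zs s \<tau>'"
  define w0 where "w0 = zs s' \<tau>"
  have al': "al' = of_int a * al + of_int c * be" "be' = of_int b * al + of_int d * be"
    unfolding al'_def be'_def s'_def al_def be_def sact_def by (simp_all add: of_rat_add of_rat_mult)
  have z'd: "z' = al * \<tau>' + be" unfolding z'_def zs_def al_def be_def by simp
  have w0d: "w0 = al' * \<tau> + be'" unfolding w0_def zs_def al'_def be'_def by simp
  have w0j: "w0 = j * z'"
    unfolding w0d z'd al' \<tau>'_def using j0 by (simp add: j_def field_simps)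
  have cw: "of_int c * w0 = al' * j - al"
  proof -
    have "of_int c * w0 - (al' * j - al) = al * (1 - (of_int a * of_int d - of_int b * of_int c))"
      unfolding w0d al' j_def by (simp add: algebra_simps)
    then show ?thesis using detc by simp
  qed
  define k1 where "k1 = - 2 * M * of_int c * z'"
  define k2 where "k2 = - M * of_int c / j"
  define p where "p = inverse (j powi k)"
  define f1 where "f1 = (\<lambda>\<delta>. ee (M * al * z') * \<phi> \<tau>' (z' + \<delta>))"
  define f2 where "f2 = (\<lambda>e. ee (M * al' * w0) * \<phi> \<tau> (w0 + e))"
  define CC where "CC = (\<lambda>q. q - w0) ` poles S \<tau> \<union> (\<lambda>q. j * q - w0) ` poles S \<tau>'"
  have key: "j * k1 = 2*M*al - 2*M*al'*j"
  proof -
    have "j * k1 = -2 * M * (of_int c * w0)" unfolding k1_def w0j by (simp add: algebra_simps)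
    then show ?thesis unfolding cw by (simp add: algebra_simps)
  qed
  have b1: "bnd (\<lambda>\<delta>. f1 \<delta> - E / (2*pi*\<i>*\<delta>)\<^sup>2 - (D - 2*M*al*E) / (2*pi*\<i>*\<delta>)) (at 0)"
    using ED unfolding jexpansion_bnd f1_def M_def al_def z'_def .
  have cC: "countable CC" unfolding CC_def using countable_poles by blast
  have expo: "M * al' * w0 - M * of_int c * (w0 + e)\<^sup>2 / j = (k1 * e + k2 * e\<^sup>2) + M * al * z'" for e
  proof -
    have cjz: "of_int c * j * z' = al' * j - al" using cw unfolding w0j by (simp add: algebra_simps)
    have sq: "M * of_int c * (w0 + e)\<^sup>2 / j = M * of_int c * (j * z'\<^sup>2 + 2 * z' * e + e\<^sup>2 / j)"
      unfolding w0j using j0 by (simp add: field_simps power2_eq_square)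
    have "M * al' * w0 - M * of_int c * (w0 + e)\<^sup>2 / j = M * al' * (j * z') - M * of_int c * (j * z'\<^sup>2 + 2 * z' * e + e\<^sup>2 / j)"
      unfolding sq by (simp add: w0j)
    also have "\<dots> = M * al' * j * z' - M * z' * (of_int c * j * z') - 2 * M * of_int c * z' * e - M * of_int c * e\<^sup>2 / j"
      by (simp add: algebra_simps power2_eq_square)
    also have "\<dots> = (k1 * e + k2 * e\<^sup>2) + M * al * z'"
      unfolding cjz k1_def k2_def by (simp add: algebra_simps)
    finally show ?thesis .
  qed
  have eq: "f2 e = p * ee (k1*e + k2*e\<^sup>2) * f1 (e/j)" if e: "e \<notin> CC" "e \<noteq> 0" for e
  proof -
    have n1: "w0 + e \<notin> poles S \<tau>"
    proof
      assume "w0 + e \<in> poles S \<tau>"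
      then have "e \<in> (\<lambda>q. q - w0) ` poles S \<tau>" by (intro image_eqI[of _ _ "w0 + e"]) auto
      with e(1) show False unfolding CC_def by blast
    qed
    have n2: "(w0 + e) / j \<notin> poles S \<tau>'"
    proof
      assume "(w0 + e) / j \<in> poles S \<tau>'"
      then have "e \<in> (\<lambda>q. j * q - w0) ` poles S \<tau>'" using j0 by (intro image_eqI[of _ _ "(w0 + e) / j"]) auto
      with e(1) show False unfolding CC_def by blast
    qed
    have zj: "(w0 + e) / j = z' + e / j" unfolding w0j using j0 by (simp add: field_simps)
    have L: "\<phi> \<tau>' (z' + e / j) = j powi k * ee (M * of_int c * (w0 + e)\<^sup>2 / j) * \<phi> \<tau> (w0 + e)"
      using law[OF n1 n2] unfolding zj M_def by simp
    have jk: "j powi k \<noteq> 0" using j0 by simp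
    have eeM: "ee (M * al' * w0) = ee (k1 * e + k2 * e\<^sup>2) * ee (M * al * z') * ee (M * of_int c * (w0 + e)\<^sup>2 / j)"
    proof -
      have "M * al' * w0 = (k1 * e + k2 * e\<^sup>2) + M * al * z' + M * of_int c * (w0 + e)\<^sup>2 / j"
        using expo[of e] by (simp add: algebra_simps)
      then show ?thesis by (simp add: ee_def distrib_left exp_add)
    qed
    show ?thesis unfolding f1_def f2_def p_def L eeM using jk by (simp add: field_simps)
  qed
  have cont: "eventually (\<lambda>e. isCont f2 e) (at 0)"
  proof -
    obtain r where r: "r > 0" "\<phi> \<tau> analytic_on ball w0 r - {w0}"
      using iso[OF assms(7), of w0] unfolding isolated_singularity_at_def by blast
    have "isCont f2 e" if e: "e \<in> ball 0 r - {0}" for e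
    proof -
      have dd: "dist w0 (w0 + e) = norm e" by (simp add: dist_norm)
      have n: "norm e < r" "e \<noteq> 0" using e by auto
      have X1: "w0 + e \<in> ball w0 r" unfolding mem_ball dd by (rule n(1))
      have X2: "w0 + e \<notin> {w0}" using n(2) by simp
      have X: "w0 + e \<in> ball w0 r - {w0}" by (rule DiffI[OF X1 X2])
      have "{w0 + e} \<subseteq> ball w0 r - {w0}" using X by (simp only: insert_subset empty_subsetI simp_thms)
      then have "\<phi> \<tau> analytic_on {w0 + e}" by (rule analytic_on_subset[OF r(2)])
      then have ic: "isCont (\<phi> \<tau>) (w0 + e)" by (rule analytic_at_imp_isCont)
      have "isCont (\<lambda>e. w0 + e) e" by (auto intro!: continuous_intros)
      from isCont_o2[OF this ic] have "isCont (\<lambda>e. \<phi> \<tau> (w0 + e)) e" .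
      then show ?thesis unfolding f2_def by (auto intro!: continuous_intros)
    qed
    then show ?thesis using eventually_at0_ball[OF r(1)] by (auto elim: eventually_mono)
  qed
  have T: "bnd (\<lambda>e. f2 e - (p*j\<^sup>2*E) / (2*pi*\<i>*e)\<^sup>2 - (p*j*D - 2*M*al'*(p*j\<^sup>2*E)) / (2*pi*\<i>*e)) (at 0)"
    by (rule transfer_abstract[OF j0 b1 eq key cont cC])
  have ED': "jexpansion \<phi> m s' \<tau> (p*j\<^sup>2*E) (p*j*D)"
    unfolding jexpansion_bnd using T unfolding f2_def M_def al'_def w0_def .
  have 1: "JE \<phi> m s \<tau>' = E" "JD \<phi> m s \<tau>' = D" using JE_JD_eq[OF ED] by simp_all
  have 2: "JE \<phi> m s' \<tau> = p*j\<^sup>2*E" "JD \<phi> m s' \<tau> = p*j*D" using JE_JD_eq[OF ED'] by simp_all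
  show ?thesis
    unfolding j_def[symmetric] \<tau>'_def[symmetric] s'_def[symmetric] 1 2 p_def
    using powi_fact1[OF j0] by simp
qed

end
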